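(* Let $M\ge 1$ be an integer and let $\rho_1>\rho_2>\dots>\rho_M>0$. Let $(a,b)\subset\mathbb R$ be a bounded interval. For $\varepsilon>0$ and $u\colon\varepsilon\mathbb Z\to\mathbb R$ with $u(x)=0$ for all $x\in\varepsilon\mathbb Z\setminus(a,b)$, write $u_k=u(\varepsilon k)$ and define $$ F_\varepsilon(u)=\sum_{k\in\mathbb Z}\varepsilon\,\biggl|\frac1\varepsilon\Bigl(\sum_{j=1}^M (u_{k+j}-u_k)\rho_j-\sum_{j=1}^M (u_{k-j+1}-u_k)\rho_j\Bigr)\biggr|^2 . $$ Then there exists a constant $\Lambda>0$, independent of $\varepsilon$ and $u$, such that $$ F_\varepsilon(u)\ \ge\ \Lambda\sum_{k\in\mathbb Z}\varepsilon\,\Bigl|\frac{u_{k+1}-u_k}{\varepsilon}\Bigr|^2 $$ for all such $u$ and all $0<\varepsilon<\frac{1}{2M}$.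
   Context: The quantity inside the absolute value equals the scaled discrete nonlocal gradient $\frac1\varepsilon\bigl(-\sum_{i=1}^M\rho_i u_{k+1-i}+\sum_{i=1}^M\rho_i u_{k+i}\bigr)$. Only finitely many terms of the sums are nonzero since $u$ vanishes outside $(a,b)$. *)

theory Defs
  imports "HOL-Analysis.Analysis"
begin

text \<open>The discrete nonlocal energy F_eps(u), with u given by its values u_k = u(eps k), k in Z.
  The sum over Z is an unconditional (infinite) sum; for admissible u only finitely many terms are nonzero.\<close>
definition F_eps :: "nat \<Rightarrow> (nat \<Rightarrow> real) \<Rightarrow> real \<Rightarrow> (int \<Rightarrow> real) \<Rightarrow> real" where
  "F_eps M rho eps u =
     (\<Sum>\<^sub>\<infinity>k::int. eps * \<bar>(1 / eps) *
        ((\<Sum>j=1..M. (u (k + int j) - u k) * rho j)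
         - (\<Sum>j=1..M. (u (k - int j + 1) - u k) * rho j))\<bar>^2)"

definition grad_energy :: "real \<Rightarrow> (int \<Rightarrow> real) \<Rightarrow> real" where
  "grad_energy eps u = (\<Sum>\<^sub>\<infinity>k::int. eps * \<bar>(u (k + 1) - u k) / eps\<bar>^2)"

end

theory Submission
  imports Defs
begin

lemma to_sum:
  fixes f :: "int \<Rightarrow> real"
  assumes "finite S" "\<And>k. k \<notin> S \<Longrightarrow> f k = 0"
  shows "(\<Sum>\<^sub>\<infinity>k. f k) = sum f S"
proof -
  have "(\<Sum>\<^sub>\<infinity>k. f k) = infsum f S"
    by (rule infsum_cong_neutral) (use assms in auto)
  then show ?thesis using assms by simp
qed

lemma shift_R:
  fixes u :: "int \<Rightarrow> real"
  shows "(\<Sum>\<^sub>\<infinity>k. u (k + a) * u (k + b)) = (\<Sum>\<^sub>\<infinity>k. u k * u (k + (b - a)))"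
proof -
  have "bij_betw (\<lambda>k. k + a) UNIV UNIV"
    by (rule bij_betwI[where g="\<lambda>k. k - a"]) auto
  then have "(\<Sum>\<^sub>\<infinity>k. (\<lambda>m. u m * u (m + (b - a))) (k + a)) = (\<Sum>\<^sub>\<infinity>k. u k * u (k + (b - a)))"
    by (rule infsum_reindex_bij_betw)
  then show ?thesis by (simp add: algebra_simps)
qed

lemma abel:
  fixes r T :: "nat \<Rightarrow> real"
  shows "(\<Sum>j=1..Suc n. r j * (T j - T (j-1))) = (\<Sum>j=1..n. (r j - r (Suc j)) * T j) + r (Suc n) * T (Suc n) - r 1 * T 0"
proof (induction n)
  case 0 then show ?case by (simp add: algebra_simps)
next
  case (Suc n)
  have "(\<Sum>j=1..Suc (Suc n). r j * (T j - T (j-1))) = (\<Sum>j=1..Suc n. r j * (T j - T (j-1))) + r (Suc (Suc n)) * (T (Suc (Suc n)) - T (Suc n))"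
    by simp
  also have "\<dots> = (\<Sum>j=1..Suc n. (r j - r (Suc j)) * T j) + r (Suc (Suc n)) * T (Suc (Suc n)) - r 1 * T 0"
    using Suc by (simp add: algebra_simps)
  finally show ?case .
qed

lemma abel_bound:
  fixes r T :: "nat \<Rightarrow> real"
  assumes "M \<ge> 1" and dec: "\<And>i j. 1 \<le> i \<Longrightarrow> i < j \<Longrightarrow> j \<le> M \<Longrightarrow> r i > r j"
    and "r M > 0" and T0: "T 0 = 0" and Tnn: "\<And>j. 1 \<le> j \<Longrightarrow> j \<le> M \<Longrightarrow> T j \<ge> 0"
  shows "(\<Sum>j=1..M. r j * (T j - T (j-1))) \<ge> (if M = 1 then r 1 else r 1 - r 2) * T 1"
proof -
  obtain n where n: "M = Suc n" using assms(1) by (cases M) auto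
  have eq: "(\<Sum>j=1..M. r j * (T j - T (j-1))) = (\<Sum>j=1..n. (r j - r (Suc j)) * T j) + r M * T M"
    using abel[of r T n] T0 n by simp
  have last: "r M * T M \<ge> 0" using assms Tnn[of M] by simp
  show ?thesis
  proof (cases "n = 0")
    case True then show ?thesis using eq n T0 by simp
  next
    case False
    have nn: "\<And>j. j \<in> {2..n} \<Longrightarrow> (r j - r (Suc j)) * T j \<ge> 0"
    proof -
      fix j assume j: "j \<in> {2..n}"
      have "r j > r (Suc j)" using dec[of j "Suc j"] j n by auto
      moreover have "T j \<ge> 0" using Tnn[of j] j n by auto
      ultimately show "(r j - r (Suc j)) * T j \<ge> 0" by simp
    qed
    have "(\<Sum>j=1..n. (r j - r (Suc j)) * T j) = (r 1 - r 2) * T 1 + (\<Sum>j=2..n. (r j - r (Suc j)) * T j)"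
      using False by (simp add: sum.atLeast_Suc_atMost numeral_2_eq_2)
    moreover have "(\<Sum>j=2..n. (r j - r (Suc j)) * T j) \<ge> 0" using nn by (rule sum_nonneg)
    ultimately show ?thesis using eq last False n by simp
  qed
qed

lemma core:
  fixes u :: "int \<Rightarrow> real" and rho :: "nat \<Rightarrow> real" and N :: int
  assumes uz: "\<And>m. N < \<bar>m\<bar> \<Longrightarrow> u m = 0"
    and M1: "M \<ge> 1" and dec: "\<And>i j. 1 \<le> i \<Longrightarrow> i < j \<Longrightarrow> j \<le> M \<Longrightarrow> rho i > rho j"
    and pos: "rho M > 0"
    and dl: "\<delta> = (if M = 1 then rho 1 else rho 1 - rho 2)"
  shows "(\<Sum>\<^sub>\<infinity>k. (\<Sum>j=1..M. rho j * (u (k + int j) - u (k + 1 - int j)))^2)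
          \<ge> \<delta>^2 * (\<Sum>\<^sub>\<infinity>k. (u (k + 1) - u k)^2)"
proof -
  define K where "K = {-(N + int M + 2)..N + int M + 2}"
  have fK: "finite K" unfolding K_def by simp
  have van: "u (k + c) = 0" if "k \<notin> K" "\<bar>c\<bar> \<le> int M + 1" for k c
    using that by (intro uz) (auto simp: K_def)
  define R where "R i = (\<Sum>\<^sub>\<infinity>k. u k * u (k + i))" for i
  have Pk: "(\<Sum>k\<in>K. u (k + a) * u (k + b)) = R (b - a)"
    if "\<bar>a\<bar> \<le> int M + 1" for a b
  proof -
    have "(\<Sum>\<^sub>\<infinity>k. u (k + a) * u (k + b)) = (\<Sum>k\<in>K. u (k + a) * u (k + b))"
      by (rule to_sum[OF fK]) (simp add: van that)
    then show ?thesis using shift_R[of u a b] unfolding R_def by simp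
  qed
  have Rsym: "R (- i) = R i" for i
  proof -
    have "R i = (\<Sum>\<^sub>\<infinity>k. u (k + i) * u (k + 0))" unfolding R_def by (simp add: mult.commute)
    also have "\<dots> = R (0 - i)" using shift_R[of u i 0] unfolding R_def by simp
    finally show ?thesis by simp
  qed
  define T where "T j = 2 * R 0 - 2 * R (int j)" for j :: nat
  have Tsq: "(\<Sum>k\<in>K. (u (k + int j) - u k)^2) = T j" if "j \<le> M" for j
  proof -
    have "(\<Sum>k\<in>K. (u (k + int j) - u k)^2) = (\<Sum>k\<in>K. u (k + int j) * u (k + int j))
        - 2 * (\<Sum>k\<in>K. u (k + int j) * u (k + 0)) + (\<Sum>k\<in>K. u (k + 0) * u (k + 0))" (is "_ = ?rhs")
    proof -
      have "(\<Sum>k\<in>K. (u (k + int j) - u k)^2) = (\<Sum>k\<in>K. u (k + int j) * u (k + int j)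
        - 2 * (u (k + int j) * u (k + 0)) + u (k + 0) * u (k + 0))"
        by (rule sum.cong) (simp_all add: power2_eq_square algebra_simps)
      also have "\<dots> = ?rhs" by (simp only: sum.distrib sum_subtractf sum_distrib_left)
      finally show ?thesis .
    qed
    also have "\<dots> = T j"
      using Pk[of "int j" "int j"] Pk[of "int j" 0] Pk[of 0 0] that Rsym[of "int j"]
      by (simp add: T_def)
    finally show ?thesis .
  qed
  have Sj: "(\<Sum>k\<in>K. (u (k + 1) - u k) * (u (k + int j) - u (k + 1 - int j))) = T j - T (j - 1)"
    if "1 \<le> j" "j \<le> M" for j
  proof -
    have "(\<Sum>k\<in>K. (u (k + 1) - u k) * (u (k + int j) - u (k + 1 - int j)))
       = (\<Sum>k\<in>K. u (k + 1) * u (k + int j)) - (\<Sum>k\<in>K. u (k + 1) * u (k + (1 - int j)))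
         - (\<Sum>k\<in>K. u (k + 0) * u (k + int j)) + (\<Sum>k\<in>K. u (k + 0) * u (k + (1 - int j)))" (is "_ = ?rhs")
    proof -
      have "(\<Sum>k\<in>K. (u (k + 1) - u k) * (u (k + int j) - u (k + 1 - int j))) = (\<Sum>k\<in>K. u (k + 1) * u (k + int j) - u (k + 1) * u (k + (1 - int j))
         - u (k + 0) * u (k + int j) + u (k + 0) * u (k + (1 - int j)))"
        by (rule sum.cong) (simp_all add: algebra_simps)
      also have "\<dots> = ?rhs" by (simp only: sum.distrib sum_subtractf)
      finally show ?thesis .
    qed
    also have "\<dots> = 2 * R (int j - 1) - 2 * R (int j)"
      using Pk[of 1 "int j"] Pk[of 1 "1 - int j"] Pk[of 0 "int j"] Pk[of 0 "1 - int j"] that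
        Rsym[of "int j"] Rsym[of "int j - 1"]
      by simp
    also have "\<dots> = T j - T (j - 1)" using that by (simp add: T_def of_nat_diff)
    finally show ?thesis .
  qed
  define g where "g k = (\<Sum>j=1..M. rho j * (u (k + int j) - u (k + 1 - int j)))" for k
  define d where "d k = u (k + 1) - u k" for k
  have Q: "(\<Sum>k\<in>K. d k * g k) = (\<Sum>j=1..M. rho j * (T j - T (j - 1)))"
  proof -
    have "(\<Sum>k\<in>K. d k * g k) = (\<Sum>k\<in>K. \<Sum>j=1..M. rho j * (d k * (u (k + int j) - u (k + 1 - int j))))"
      unfolding g_def by (simp add: sum_distrib_left mult.left_commute)
    also have "\<dots> = (\<Sum>j=1..M. \<Sum>k\<in>K. rho j * (d k * (u (k + int j) - u (k + 1 - int j))))"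
      by (rule sum.swap)
    also have "\<dots> = (\<Sum>j=1..M. rho j * (T j - T (j - 1)))"
      by (rule sum.cong) (simp_all add: sum_distrib_left[symmetric] Sj d_def)
    finally show ?thesis .
  qed
  have Qb: "(\<Sum>k\<in>K. d k * g k) \<ge> \<delta> * T 1"
  proof -
    have T0: "T 0 = 0" by (simp add: T_def)
    have Tn: "T j \<ge> 0" if "1 \<le> j" "j \<le> M" for j
    proof -
      have "0 \<le> (\<Sum>k\<in>K. (u (k + int j) - u k)^2)" by (rule sum_nonneg) simp
      then show ?thesis using Tsq[of j] that by simp
    qed
    have "(\<Sum>j=1..M. rho j * (T j - T (j - 1))) \<ge> \<delta> * T 1"
      unfolding dl by (rule abel_bound[where r=rho and T=T, OF M1 dec pos T0 Tn])
    then show ?thesis unfolding Q .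
  qed
  have D: "(\<Sum>k\<in>K. (d k)^2) = T 1" using Tsq[of 1] M1 by (simp add: d_def)
  have dpos: "\<delta> > 0"
  proof (cases "M = 1")
    case True then show ?thesis using dl pos by simp
  next
    case False then have "rho 1 > rho 2" using dec[of 1 2] M1 by simp
    then show ?thesis using dl False by simp
  qed
  have "0 \<le> (\<Sum>k\<in>K. (g k - \<delta> * d k)^2)" by (rule sum_nonneg) simp
  also have "\<dots> = (\<Sum>k\<in>K. (g k)^2 - (2 * \<delta>) * (d k * g k) + \<delta>^2 * (d k)^2)"
    by (rule sum.cong) (simp_all add: power2_eq_square algebra_simps)
  also have "\<dots> = (\<Sum>k\<in>K. (g k)^2) - (2 * \<delta>) * (\<Sum>k\<in>K. d k * g k) + \<delta>^2 * (\<Sum>k\<in>K. (d k)^2)"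
    by (simp only: sum.distrib sum_subtractf sum_distrib_left)
  finally have ineq: "0 \<le> (\<Sum>k\<in>K. (g k)^2) - (2 * \<delta>) * (\<Sum>k\<in>K. d k * g k) + \<delta>^2 * (\<Sum>k\<in>K. (d k)^2)" .
  have "(2 * \<delta>) * (\<delta> * T 1) \<le> (2 * \<delta>) * (\<Sum>k\<in>K. d k * g k)"
    using Qb dpos by (intro mult_left_mono) auto
  then have main: "(\<Sum>k\<in>K. (g k)^2) \<ge> \<delta>^2 * (\<Sum>k\<in>K. (d k)^2)"
    using ineq D by (simp add: power2_eq_square)
  have G: "(\<Sum>\<^sub>\<infinity>k. (g k)^2) = (\<Sum>k\<in>K. (g k)^2)"
  proof (rule to_sum[OF fK])
    fix k assume k: "k \<notin> K"
    have "g k = 0" unfolding g_def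
    proof (rule sum.neutral, rule ballI)
      fix j assume j: "j \<in> {1..M}"
      have "u (k + int j) = 0" by (rule van[OF k]) (use j in auto)
      moreover have "u (k + 1 - int j) = 0" using van[OF k, of "1 - int j"] j by (auto simp: algebra_simps)
      ultimately show "rho j * (u (k + int j) - u (k + 1 - int j)) = 0" by simp
    qed
    then show "(g k)^2 = 0" by simp
  qed
  have Dinf: "(\<Sum>\<^sub>\<infinity>k. (u (k + 1) - u k)^2) = (\<Sum>k\<in>K. (d k)^2)"
    unfolding d_def
  proof (rule to_sum[OF fK])
    fix k assume k: "k \<notin> K"
    show "(u (k + 1) - u k)^2 = 0" using van[OF k, of 1] van[OF k, of 0] by simp
  qed
  show ?thesis using main G Dinf unfolding g_def by simp
qed

lemma supp_bound:
  fixes u :: "int \<Rightarrow> real"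
  assumes "eps > 0" "\<forall>k::int. eps * real_of_int k \<notin> {a<..<b} \<longrightarrow> u k = 0"
  shows "\<exists>N::int. \<forall>m. N < \<bar>m\<bar> \<longrightarrow> u m = 0"
proof (intro exI allI impI)
  define N where "N = max \<bar>\<lfloor>a / eps\<rfloor>\<bar> \<bar>\<lceil>b / eps\<rceil>\<bar>"
  fix m :: int assume m: "N < \<bar>m\<bar>"
  show "u m = 0"
  proof (rule ccontr)
    assume "u m \<noteq> 0"
    then have "eps * m \<in> {a<..<b}" using assms(2) by blast
    then have "a < eps * m" "eps * m < b" by auto
    then have "a / eps < m" "m < b / eps" using assms(1) by (simp_all add: field_simps)
    then have "\<lfloor>a / eps\<rfloor> \<le> m" "m \<le> \<lceil>b / eps\<rceil>"
      by (simp_all add: floor_le_iff le_ceiling_iff)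
    then show False using m unfolding N_def by linarith
  qed
qed

theorem theorem4p1:
  fixes M :: nat and rho :: "nat \<Rightarrow> real" and a b :: real
  assumes "M \<ge> 1"
    and "\<And>i j. 1 \<le> i \<Longrightarrow> i < j \<Longrightarrow> j \<le> M \<Longrightarrow> rho i > rho j"
    and "rho M > 0"
  shows "\<exists>\<Lambda>>0. \<forall>eps u. 0 < eps \<longrightarrow> eps < 1 / (2 * real M) \<longrightarrow>
           (\<forall>k::int. eps * real_of_int k \<notin> {a<..<b} \<longrightarrow> u k = 0) \<longrightarrow>
           F_eps M rho eps u \<ge> \<Lambda> * grad_energy eps u"
proof -
  define \<delta> where "\<delta> = (if M = 1 then rho 1 else rho 1 - rho 2)"
  have dpos: "\<delta> > 0"
  proof (cases "M = 1")
    case True then show ?thesis using \<delta>_def assms(3) by simp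
  next
    case False then have "rho 1 > rho 2" using assms(2)[of 1 2] assms(1) by simp
    then show ?thesis using \<delta>_def False by simp
  qed
  show ?thesis
  proof (intro exI[of _ "\<delta>^2"] conjI allI impI)
    show "\<delta>^2 > 0" using dpos by simp
    fix eps :: real and u :: "int \<Rightarrow> real"
    assume e: "0 < eps" and "eps < 1 / (2 * real M)"
      and supp: "\<forall>k::int. eps * real_of_int k \<notin> {a<..<b} \<longrightarrow> u k = 0"
    obtain N where N: "\<forall>m. N < \<bar>m\<bar> \<longrightarrow> u m = 0" using supp_bound[OF e supp] by blast
    have C: "(\<Sum>\<^sub>\<infinity>k. (\<Sum>j=1..M. rho j * (u (k + int j) - u (k + 1 - int j)))^2)
          \<ge> \<delta>^2 * (\<Sum>\<^sub>\<infinity>k. (u (k + 1) - u k)^2)"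
      by (rule core[OF _ assms \<delta>_def]) (use N in auto)
    have F: "F_eps M rho eps u = (1 / eps) * (\<Sum>\<^sub>\<infinity>k. (\<Sum>j=1..M. rho j * (u (k + int j) - u (k + 1 - int j)))^2)"
    proof -
      have "F_eps M rho eps u = (\<Sum>\<^sub>\<infinity>k. (1 / eps) * (\<Sum>j=1..M. rho j * (u (k + int j) - u (k + 1 - int j)))^2)"
        unfolding F_eps_def
      proof (rule infsum_cong)
        fix k
        have X: "(\<Sum>j=1..M. (u (k + int j) - u k) * rho j) - (\<Sum>j=1..M. (u (k - int j + 1) - u k) * rho j)
            = (\<Sum>j=1..M. rho j * (u (k + int j) - u (k + 1 - int j)))"
          unfolding sum_subtractf[symmetric] by (rule sum.cong) (simp_all add: algebra_simps)
        show "eps * \<bar>1 / eps * ((\<Sum>j=1..M. (u (k + int j) - u k) * rho j) - (\<Sum>j=1..M. (u (k - int j + 1) - u k) * rho j))\<bar>^2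
            = 1 / eps * (\<Sum>j=1..M. rho j * (u (k + int j) - u (k + 1 - int j)))^2"
          unfolding X using e by (simp add: power2_eq_square field_simps)
      qed
      then show ?thesis by (simp only: infsum_cmult_right')
    qed
    have Gr: "grad_energy eps u = (1 / eps) * (\<Sum>\<^sub>\<infinity>k. (u (k + 1) - u k)^2)"
    proof -
      have "grad_energy eps u = (\<Sum>\<^sub>\<infinity>k. (1 / eps) * (u (k + 1) - u k)^2)"
        unfolding grad_energy_def
        by (rule infsum_cong) (use e in \<open>simp add: power2_eq_square field_simps\<close>)
      then show ?thesis by (simp only: infsum_cmult_right')
    qed
    have "(1 / eps) * (\<delta>^2 * (\<Sum>\<^sub>\<infinity>k. (u (k + 1) - u k)^2)) \<le> (1 / eps) * (\<Sum>\<^sub>\<infinity>k. (\<Sum>j=1..M. rho j * (u (k + int j) - u (k + 1 - int j)))^2)"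
      using C e by (intro mult_left_mono) auto
    then show "F_eps M rho eps u \<ge> \<delta>^2 * grad_energy eps u"
      unfolding F Gr by (simp add: algebra_simps)
  qed
qed

end
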